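(* Let $X$ be an Alexandroff space, $Y$ a topological space, $x\in X$, and $f:X\to Y$ a map with closed graph. Then the restriction of $f$ to $[x]_{\Re_X}$ is constant.
   Context: For a map $f:X\to Y$ its graph is $G_f=\{(x,f(x)):x\in X\}$; $f$ has closed graph if $G_f$ is closed in $X\times Y$ (product topology). A topological space $X$ is an Alexandroff space if the intersection of every nonempty family of open subsets of $X$ is open; equivalently, every point $a\in X$ has a smallest open neighbourhood, denoted $V_a$. On an Alexandroff space $X$ define the relation $\Re_X$ by: $(x,y)\in\Re_X$ iff there exist $x=x_1,x_2,\ldots,x_n=y$ in $X$ with $V_{x_i}\cap V_{x_{i+1}}\neq\emptyset$ for all $i\in\{1,\ldots,n-1\}$. This is an equivalence relation, and $[x]_{\Re_X}=\{y\in X:(x,y)\in\Re_X\}$ denotes the equivalence class of $x$. *)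

theory Defs
  imports "HOL-Analysis.Analysis"
begin

definition alexandroff_space :: "'a topology \<Rightarrow> bool" where
  "alexandroff_space X \<longleftrightarrow>
     (\<forall>\<U>. \<U> \<noteq> {} \<and> (\<forall>U\<in>\<U>. openin X U) \<longrightarrow> openin X (\<Inter>\<U>))"

text \<open>Smallest open neighbourhood of a point (meaningful in an Alexandroff space).\<close>
definition min_nbhd :: "'a topology \<Rightarrow> 'a \<Rightarrow> 'a set" where
  "min_nbhd X a = \<Inter>{U. openin X U \<and> a \<in> U}"

definition alex_rel :: "'a topology \<Rightarrow> 'a \<Rightarrow> 'a \<Rightarrow> bool" where
  "alex_rel X x y \<longleftrightarrow>
     (\<exists>xs. xs \<noteq> [] \<and> set xs \<subseteq> topspace X \<and> hd xs = x \<and> last xs = y \<and>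
        (\<forall>i. Suc i < length xs \<longrightarrow> min_nbhd X (xs ! i) \<inter> min_nbhd X (xs ! Suc i) \<noteq> {}))"

definition alex_class :: "'a topology \<Rightarrow> 'a \<Rightarrow> 'a set" where
  "alex_class X x = {y \<in> topspace X. alex_rel X x y}"

definition graph_of :: "'a topology \<Rightarrow> ('a \<Rightarrow> 'b) \<Rightarrow> ('a \<times> 'b) set" where
  "graph_of X f = {(x, f x) | x. x \<in> topspace X}"

end

theory Submission
  imports Defs
begin

lemma key:
  assumes a: "a \<in> topspace X" and z: "z \<in> min_nbhd X a"
    and f: "f \<in> topspace X \<rightarrow> topspace Y"
    and cl: "closedin (prod_topology X Y) (graph_of X f)"
  shows "f z = f a"
proof (rule ccontr)
  assume ne: "f z \<noteq> f a"
  have zU: "\<And>U. openin X U \<Longrightarrow> a \<in> U \<Longrightarrow> z \<in> U"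
    using z unfolding min_nbhd_def by blast
  have zt: "z \<in> topspace X" using zU[of "topspace X"] a by simp
  have op: "openin (prod_topology X Y) (topspace (prod_topology X Y) - graph_of X f)"
    using cl by (simp add: closedin_def)
  have mem: "(a, f z) \<in> topspace (prod_topology X Y) - graph_of X f"
    using a zt f ne by (auto simp: graph_of_def)
  then obtain U V where UV: "openin X U" "openin Y V" "a \<in> U" "f z \<in> V"
     "U \<times> V \<subseteq> topspace (prod_topology X Y) - graph_of X f"
    using op unfolding openin_prod_topology_alt by blast
  have "z \<in> U" using zU UV by blast
  hence "(z, f z) \<in> U \<times> V" using UV by simp
  moreover have "(z, f z) \<in> graph_of X f" using zt by (auto simp: graph_of_def)
  ultimately show False using UV(5) by blast
qed

theorem lemma3p3:
  fixes X :: "'a topology" and Y :: "'b topology" and f :: "'a \<Rightarrow> 'b" and x :: 'a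
  assumes "alexandroff_space X"
    and "x \<in> topspace X"
    and "f \<in> topspace X \<rightarrow> topspace Y"
    and "closedin (prod_topology X Y) (graph_of X f)"
  shows "\<exists>c. \<forall>y \<in> alex_class X x. f y = c"
proof (intro exI ballI)
  fix y assume "y \<in> alex_class X x"
  then obtain xs where xs: "xs \<noteq> []" "set xs \<subseteq> topspace X" "hd xs = x" "last xs = y"
    "\<forall>i. Suc i < length xs \<longrightarrow> min_nbhd X (xs ! i) \<inter> min_nbhd X (xs ! Suc i) \<noteq> {}"
    unfolding alex_class_def alex_rel_def by blast
  have "\<forall>i. i < length xs \<longrightarrow> f (xs ! i) = f x"
  proof (intro allI)
    fix i show "i < length xs \<longrightarrow> f (xs ! i) = f x"
    proof (induction i)
      case 0 then show ?case using xs by (simp add: hd_conv_nth)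
    next
      case (Suc i)
      show ?case
      proof
        assume l: "Suc i < length xs"
        then obtain z where z: "z \<in> min_nbhd X (xs ! i)" "z \<in> min_nbhd X (xs ! Suc i)"
          using xs(5) by blast
        have t1: "xs ! i \<in> topspace X" "xs ! Suc i \<in> topspace X"
          using xs(2) l by auto
        have "f z = f (xs ! i)" by (rule key[OF t1(1) z(1) assms(3,4)])
        moreover have "f z = f (xs ! Suc i)" by (rule key[OF t1(2) z(2) assms(3,4)])
        ultimately show "f (xs ! Suc i) = f x" using Suc l by simp
      qed
    qed
  qed
  moreover have "length xs - 1 < length xs" using xs(1) by simp
  ultimately show "f y = f x" using xs by (metis last_conv_nth)
qed

end
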